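(* Let $H$ be a complex Hilbert space and let $T$ be a positive closed operator in $H$ (i.e. $T$ is densely defined, closed, $T=T^*$ and $\langle Tx,x\rangle\geq 0$ for all $x\in D(T)$). Then for each $\epsilon>0$ there exists a bounded operator $S\in\mathcal B(H)$ such that (1) $\|S\|\leq\epsilon$; (2) $T+S$ (with domain $D(T)$) is minimum attaining; (3) $\theta(S+T,T)\leq\epsilon$.
   Context: Hilbert spaces are complex and infinite dimensional. For a densely defined closed operator $A$ with domain $D(A)$, the minimum modulus is $m(A)=\inf\{\|Ax\|: x\in D(A),\ \|x\|=1\}$, and $A$ is called minimum attaining if there exists $x_0\in D(A)$ with $\|x_0\|=1$ and $\|Ax_0\|=m(A)$. The graph of $A$ is $G(A)=\{(Ax,x):x\in D(A)\}$; the gap between densely defined closed operators $A,B$ is $\theta(A,B)=\|P_{G(A)}-P_{G(B)}\|$, where $P_M$ is the orthogonal projection onto the closed subspace $M$. *)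

theory Defs
  imports "HOL-Analysis.Analysis"
begin

class chilbert = real_normed_vector + complete_space +
  fixes scaleC :: "complex \<Rightarrow> 'a \<Rightarrow> 'a" (infixr "*\<^sub>C" 75)
    and cinner :: "'a \<Rightarrow> 'a \<Rightarrow> complex"
  assumes scaleC_add_right: "a *\<^sub>C (x + y) = a *\<^sub>C x + a *\<^sub>C y"
    and scaleC_add_left: "(a + b) *\<^sub>C x = a *\<^sub>C x + b *\<^sub>C x"
    and scaleC_scaleC: "a *\<^sub>C (b *\<^sub>C x) = (a * b) *\<^sub>C x"
    and scaleC_one: "1 *\<^sub>C x = x"
    and scaleR_scaleC: "scaleR r x = complex_of_real r *\<^sub>C x"
    and cinner_commute: "cinner x y = cnj (cinner y x)"
    and cinner_add_right: "cinner x (y + z) = cinner x y + cinner x z"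
    and cinner_scaleC_right: "cinner x (a *\<^sub>C y) = a * cinner x y"
    and norm_eq_sqrt_cinner: "norm x = sqrt (Re (cinner x x))"

definition infinite_dimensional :: "'a::chilbert itself \<Rightarrow> bool" where
  "infinite_dimensional _ \<longleftrightarrow>
     (\<forall>F::'a set. finite F \<longrightarrow> (\<exists>x. \<forall>c. x \<noteq> (\<Sum>v\<in>F. c v *\<^sub>C v)))"

text \<open>An (unbounded) operator is a pair of a domain D and a map A (values of A
outside D are irrelevant).\<close>

definition complex_subspace :: "'a::chilbert set \<Rightarrow> bool" where
  "complex_subspace D \<longleftrightarrow> 0 \<in> D \<and> (\<forall>x\<in>D. \<forall>y\<in>D. x + y \<in> D)
     \<and> (\<forall>c. \<forall>x\<in>D. c *\<^sub>C x \<in> D)"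

definition linear_on :: "'a::chilbert set \<Rightarrow> ('a \<Rightarrow> 'a) \<Rightarrow> bool" where
  "linear_on D A \<longleftrightarrow> (\<forall>x\<in>D. \<forall>y\<in>D. A (x + y) = A x + A y)
     \<and> (\<forall>c. \<forall>x\<in>D. A (c *\<^sub>C x) = c *\<^sub>C A x)"

definition densely_defined :: "'a::chilbert set \<Rightarrow> ('a \<Rightarrow> 'a) \<Rightarrow> bool" where
  "densely_defined D A \<longleftrightarrow> complex_subspace D \<and> closure D = UNIV \<and> linear_on D A"

definition graph :: "'a::chilbert set \<Rightarrow> ('a \<Rightarrow> 'a) \<Rightarrow> ('a \<times> 'a) set" where
  "graph D A = {(A x, x) | x. x \<in> D}"

definition closed_op :: "'a::chilbert set \<Rightarrow> ('a \<Rightarrow> 'a) \<Rightarrow> bool" where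
  "closed_op D A \<longleftrightarrow> closed (graph D A)"

definition adj_dom :: "'a::chilbert set \<Rightarrow> ('a \<Rightarrow> 'a) \<Rightarrow> 'a set" where
  "adj_dom D A = {y. \<exists>z. \<forall>x\<in>D. cinner (A x) y = cinner x z}"

definition adjoint :: "'a::chilbert set \<Rightarrow> ('a \<Rightarrow> 'a) \<Rightarrow> 'a \<Rightarrow> 'a" where
  "adjoint D A y = (THE z. \<forall>x\<in>D. cinner (A x) y = cinner x z)"

definition self_adjoint :: "'a::chilbert set \<Rightarrow> ('a \<Rightarrow> 'a) \<Rightarrow> bool" where
  "self_adjoint D A \<longleftrightarrow> adj_dom D A = D \<and> (\<forall>y\<in>D. adjoint D A y = A y)"

definition positive_closed_op :: "'a::chilbert set \<Rightarrow> ('a \<Rightarrow> 'a) \<Rightarrow> bool" where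
  "positive_closed_op D T \<longleftrightarrow> densely_defined D T \<and> closed_op D T \<and> self_adjoint D T
     \<and> (\<forall>x\<in>D. Im (cinner (T x) x) = 0 \<and> Re (cinner (T x) x) \<ge> 0)"

definition bounded_clinear :: "('a::chilbert \<Rightarrow> 'a) \<Rightarrow> bool" where
  "bounded_clinear S \<longleftrightarrow> linear_on UNIV S \<and> (\<exists>K. \<forall>x. norm (S x) \<le> norm x * K)"

definition min_modulus :: "'a::chilbert set \<Rightarrow> ('a \<Rightarrow> 'a) \<Rightarrow> real" where
  "min_modulus D A = Inf {norm (A x) | x. x \<in> D \<and> norm x = 1}"

definition minimum_attaining :: "'a::chilbert set \<Rightarrow> ('a \<Rightarrow> 'a) \<Rightarrow> bool" where
  "minimum_attaining D A \<longleftrightarrow> (\<exists>x0\<in>D. norm x0 = 1 \<and> norm (A x0) = min_modulus D A)"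

text \<open>Hilbert space H \<oplus> H: inner product on pairs; its norm is the product
norm of Product_Vector (norm_Pair).\<close>
definition pinner :: "'a::chilbert \<times> 'a \<Rightarrow> 'a \<times> 'a \<Rightarrow> complex" where
  "pinner p q = cinner (fst p) (fst q) + cinner (snd p) (snd q)"

definition orth_proj :: "('a::chilbert \<times> 'a) set \<Rightarrow> 'a \<times> 'a \<Rightarrow> 'a \<times> 'a" where
  "orth_proj M z = (THE p. p \<in> M \<and> (\<forall>m\<in>M. pinner (z - p) m = 0))"

definition gap :: "'a::chilbert set \<Rightarrow> ('a \<Rightarrow> 'a) \<Rightarrow> 'a set \<Rightarrow> ('a \<Rightarrow> 'a) \<Rightarrow> real" where
  "gap DA A DB B = onorm (\<lambda>z. orth_proj (graph DA A) z - orth_proj (graph DB B) z)"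

end

theory Submission
  imports Defs
begin



context chilbert begin
end

lemma cinner_add_left: "cinner (x + y) (z::'a::chilbert) = cinner x z + cinner y z"
  by (metis cinner_commute cinner_add_right complex_cnj_add)

lemma cinner_scaleC_left: "cinner (a *\<^sub>C x) (y::'a::chilbert) = cnj a * cinner x y"
  by (metis cinner_commute cinner_scaleC_right complex_cnj_mult)

lemma scaleC_zero_right[simp]: "a *\<^sub>C (0::'a::chilbert) = 0"
  by (metis add_cancel_right_right add_0 scaleC_add_right)

lemma scaleC_zero_left[simp]: "0 *\<^sub>C (x::'a::chilbert) = 0"
  by (metis add_cancel_right_right add_0 scaleC_add_left)

lemma scaleC_of_real: "complex_of_real r *\<^sub>C (x::'a::chilbert) = scaleR r x"
  by (simp add: scaleR_scaleC)

lemma scaleC_minus1: "(-1) *\<^sub>C (x::'a::chilbert) = - x"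
  by (metis scaleC_of_real of_real_1 of_real_minus scaleR_minus1_left)

lemma scaleC_minus_left: "(- a) *\<^sub>C (x::'a::chilbert) = - (a *\<^sub>C x)"
  by (metis scaleC_minus1 scaleC_scaleC mult_minus1)

lemma scaleC_minus_right: "a *\<^sub>C (- x::'a::chilbert) = - (a *\<^sub>C x)"
  by (metis scaleC_minus1 scaleC_scaleC mult.commute)

lemma scaleC_diff_right: "a *\<^sub>C (x - y::'a::chilbert) = a *\<^sub>C x - a *\<^sub>C y"
  by (metis diff_conv_add_uminus scaleC_add_right scaleC_minus_right)

lemma scaleC_diff_left: "(a - b) *\<^sub>C (x::'a::chilbert) = a *\<^sub>C x - b *\<^sub>C x"
  by (metis diff_conv_add_uminus scaleC_add_left scaleC_minus_left)

lemma cinner_zero_right[simp]: "cinner x (0::'a::chilbert) = 0"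
  using cinner_add_right[of x 0 0] by simp

lemma cinner_zero_left[simp]: "cinner (0::'a::chilbert) x = 0"
  using cinner_add_left[of 0 0 x] by simp

lemma cinner_minus_right: "cinner x (- y::'a::chilbert) = - cinner x y"
  using cinner_add_right[of x y "-y"] by (simp add: eq_neg_iff_add_eq_0 add.commute)

lemma cinner_minus_left: "cinner (- x::'a::chilbert) y = - cinner x y"
  using cinner_add_left[of x "-x" y] by (simp add: eq_neg_iff_add_eq_0 add.commute)

lemma cinner_diff_right: "cinner x (y - z::'a::chilbert) = cinner x y - cinner x z"
  using cinner_add_right[of x y "-z"] cinner_minus_right[of x z] by simp

lemma cinner_diff_left: "cinner (x - y::'a::chilbert) z = cinner x z - cinner y z"
  using cinner_add_left[of x "-y" z] cinner_minus_left[of y z] by simp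

lemma cinner_self_Im: "Im (cinner x (x::'a::chilbert)) = 0"
proof -
  have "Im (cinner x x) = Im (cnj (cinner x x))" using cinner_commute[of x x] by simp
  then show ?thesis by simp
qed

lemma cinner_self_Re: "Re (cinner x (x::'a::chilbert)) = (norm x)^2"
proof -
  have "0 \<le> Re (cinner x x)"
  proof (rule ccontr)
    assume "\<not> 0 \<le> Re (cinner x x)"
    then have "sqrt (Re (cinner x x)) < 0" by simp
    then show False using norm_eq_sqrt_cinner[of x] norm_ge_zero[of x] by linarith
  qed
  then show ?thesis using norm_eq_sqrt_cinner[of x] by simp
qed

lemma cinner_self: "cinner x (x::'a::chilbert) = complex_of_real ((norm x)^2)"
  using cinner_self_Re[of x] cinner_self_Im[of x] by (simp add: complex_eq_iff)

lemma norm_scaleC: "norm (a *\<^sub>C (x::'a::chilbert)) = cmod a * norm x"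
proof -
  have "cinner (a *\<^sub>C x) (a *\<^sub>C x) = cnj a * a * cinner x x"
    by (simp add: cinner_scaleC_left cinner_scaleC_right)
  then have "(norm (a *\<^sub>C x))^2 = Re (cnj a * a * cinner x x)"
    using cinner_self_Re[of "a *\<^sub>C x"] by simp
  also have "\<dots> = (cmod a)^2 * (norm x)^2"
  proof -
    have "cnj a * a = complex_of_real ((cmod a)^2)" using complex_norm_square[of a] by (simp add: mult.commute)
    then show ?thesis by (simp add: cinner_self del: of_real_power)
  qed
  finally have "(norm (a *\<^sub>C x))^2 = (cmod a * norm x)^2" by (simp add: power_mult_distrib)
  then show ?thesis by (simp add: power2_eq_iff_nonneg)
qed




lemma abstract_CS:
  fixes fxx fxy fyx fyy :: complex and g :: "complex \<Rightarrow> complex"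
  assumes pos: "\<And>l. 0 \<le> Re (g l)"
    and expand: "\<And>l. g l = fxx - l * fxy - cnj l * fyx + cnj l * l * fyy"
    and herm: "fyx = cnj fxy"
    and b0: "0 \<le> Re fyy"
  shows "(cmod fxy)^2 \<le> Re fxx * Re fyy"
proof -
  define a where "a = Re fxx"
  define b where "b = Re fyy"
  define k where "k = (cmod fxy)^2"
  have key: "0 \<le> a - 2*t*k + t^2*k*b" for t :: real
  proof -
    have "Re (g (complex_of_real t * cnj fxy)) = a - 2*t*k + t^2*k*b"
      unfolding expand herm a_def b_def k_def
      by (cases fxy) (simp add: cmod_def power2_eq_square algebra_simps)
    then show ?thesis using pos by metis
  qed
  show ?thesis
  proof (cases "k = 0")
    case True
    have "0 \<le> a" using key[of 0] by simp
    then show ?thesis using b0 True unfolding k_def by (simp add: a_def b_def)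
  next
    case False
    then have kp: "k > 0" unfolding k_def by simp
    show ?thesis
    proof (cases "b = 0")
      case True
      have "0 \<le> a - 2*((\<bar>a\<bar>+1)/(2*k))*k" using key[of "(\<bar>a\<bar>+1)/(2*k)"] True by simp
      then have "0 \<le> a - (\<bar>a\<bar>+1)" using kp by simp
      then show ?thesis by linarith
    next
      case False
      then have bp: "b > 0" using b0 b_def by simp
      have "0 \<le> a - 2*(1/b)*k + (1/b)^2*k*b" using key[of "1/b"] by simp
      then have "0 \<le> a - k/b" using bp by (simp add: power2_eq_square field_simps)
      then have "k/b \<le> a" by simp
      then have "k \<le> a * b" using bp by (simp add: divide_le_eq)
      then show ?thesis unfolding k_def a_def b_def .
    qed
  qed
qed




lemma cinner_expand_diff:
  "cinner (x - l *\<^sub>C y) (x - l *\<^sub>C (y::'a::chilbert)) =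
     cinner x x - l * cinner x y - cnj l * cinner y x + cnj l * l * cinner y y"
  by (simp add: cinner_diff_left cinner_diff_right cinner_scaleC_left cinner_scaleC_right algebra_simps)

lemma cauchy_schwarz: "cmod (cinner x (y::'a::chilbert)) \<le> norm x * norm y"
proof -
  have "(cmod (cinner x y))^2 \<le> Re (cinner x x) * Re (cinner y y)"
  proof (rule abstract_CS[where g="\<lambda>l. cinner (x - l *\<^sub>C y) (x - l *\<^sub>C y)"])
    fix l show "0 \<le> Re (cinner (x - l *\<^sub>C y) (x - l *\<^sub>C y))" unfolding cinner_self_Re by simp
  next
    fix l show "cinner (x - l *\<^sub>C y) (x - l *\<^sub>C y) = cinner x x - l * cinner x y - cnj l * cinner y x + cnj l * l * cinner y y"
      by (rule cinner_expand_diff)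
  next
    show "cinner y x = cnj (cinner x y)" by (rule cinner_commute)
  next
    show "0 \<le> Re (cinner y y)" unfolding cinner_self_Re by simp
  qed
  then have "(cmod (cinner x y))^2 \<le> (norm x * norm y)^2"
    unfolding cinner_self_Re by (simp add: power_mult_distrib)
  then show ?thesis
    by (rule power2_le_imp_le) simp
qed

instantiation prod :: (chilbert, chilbert) chilbert
begin
definition scaleC_prod_def: "scaleC c p = (c *\<^sub>C fst p, c *\<^sub>C snd p)"
definition cinner_prod_def: "cinner p q = cinner (fst p) (fst q) + cinner (snd p) (snd q)"
instance
proof
  fix a b :: complex and x y z :: "'a \<times> 'b" and r :: real
  show "a *\<^sub>C (x + y) = a *\<^sub>C x + a *\<^sub>C y" by (simp add: scaleC_prod_def scaleC_add_right)
  show "(a + b) *\<^sub>C x = a *\<^sub>C x + b *\<^sub>C x" by (simp add: scaleC_prod_def scaleC_add_left)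
  show "a *\<^sub>C (b *\<^sub>C x) = (a * b) *\<^sub>C x" by (simp add: scaleC_prod_def scaleC_scaleC)
  show "1 *\<^sub>C x = x" by (simp add: scaleC_prod_def scaleC_one)
  show "r *\<^sub>R x = complex_of_real r *\<^sub>C x" by (simp add: scaleC_prod_def scaleR_scaleC prod_eq_iff)
  show "cinner x y = cnj (cinner y x)" by (simp add: cinner_prod_def cinner_commute[of "fst x"] cinner_commute[of "snd x"])
  show "cinner x (y + z) = cinner x y + cinner x z" by (simp add: cinner_prod_def cinner_add_right)
  show "cinner x (a *\<^sub>C y) = a * cinner x y" by (simp add: cinner_prod_def scaleC_prod_def cinner_scaleC_right algebra_simps)
  show "norm x = sqrt (Re (cinner x x))"
    by (cases x) (simp add: cinner_prod_def norm_Pair cinner_self_Re)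
qed
end

lemma pinner_eq: "pinner p q = cinner p (q::'a::chilbert \<times> 'a)"
  by (simp add: pinner_def cinner_prod_def)

lemma orth_proj_alt: "orth_proj M z = (THE p. p \<in> M \<and> (\<forall>m\<in>M. cinner (z - p) m = 0))"
  by (simp add: orth_proj_def pinner_eq)




lemma norm_add_sq: "(norm (a + b))^2 = (norm a)^2 + (norm b)^2 + 2 * Re (cinner a (b::'a::chilbert))"
proof -
  have "Re (cinner b a) = Re (cinner a b)" using cinner_commute[of b a] by simp
  then show ?thesis
    unfolding cinner_self_Re[symmetric] by (simp add: cinner_add_left cinner_add_right)
qed

lemma norm_diff_sq: "(norm (a - b))^2 = (norm a)^2 + (norm b)^2 - 2 * Re (cinner a (b::'a::chilbert))"
proof -
  have "Re (cinner b a) = Re (cinner a b)" using cinner_commute[of b a] by simp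
  then show ?thesis
    unfolding cinner_self_Re[symmetric] by (simp add: cinner_diff_left cinner_diff_right)
qed

lemma parallelogram: "(norm (a + b))^2 + (norm (a - b))^2 = 2*(norm a)^2 + 2*(norm (b::'a::chilbert))^2"
  using norm_add_sq[of a b] norm_diff_sq[of a b] by simp

lemma pythagoras: "cinner a b = 0 \<Longrightarrow> (norm (a + b))^2 = (norm a)^2 + (norm (b::'a::chilbert))^2"
  using norm_add_sq[of a b] by simp

lemma pythagoras_diff: "cinner a b = 0 \<Longrightarrow> (norm (a - b))^2 = (norm a)^2 + (norm (b::'a::chilbert))^2"
  using norm_diff_sq[of a b] by simp

lemma subspace_add: "complex_subspace M \<Longrightarrow> x \<in> M \<Longrightarrow> y \<in> M \<Longrightarrow> x + y \<in> M"
  by (simp add: complex_subspace_def)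
lemma subspace_scaleC: "complex_subspace M \<Longrightarrow> x \<in> M \<Longrightarrow> c *\<^sub>C x \<in> M"
  by (simp add: complex_subspace_def)
lemma subspace_zero: "complex_subspace M \<Longrightarrow> 0 \<in> M"
  by (simp add: complex_subspace_def)
lemma subspace_minus: "complex_subspace M \<Longrightarrow> x \<in> (M::'a::chilbert set) \<Longrightarrow> - x \<in> M"
  by (metis scaleC_minus1 subspace_scaleC)
lemma subspace_diff: "complex_subspace M \<Longrightarrow> x \<in> (M::'a::chilbert set) \<Longrightarrow> y \<in> M \<Longrightarrow> x - y \<in> M"
  by (metis diff_conv_add_uminus subspace_add subspace_minus)
lemma subspace_scaleR: "complex_subspace M \<Longrightarrow> x \<in> (M::'a::chilbert set) \<Longrightarrow> scaleR r x \<in> M"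
  by (metis scaleC_of_real subspace_scaleC)

lemma orth_of_min:
  fixes w m :: "'a::chilbert"
  assumes "\<And>l. norm w \<le> norm (w - l *\<^sub>C m)"
  shows "cinner w m = 0"
proof -
  have "(cmod (cinner w m))^2 \<le> Re 0 * Re (cinner m m)"
  proof (rule abstract_CS[where g="\<lambda>l. cinner (w - l *\<^sub>C m) (w - l *\<^sub>C m) - cinner w w"])
    fix l
    have "norm w ^2 \<le> norm (w - l *\<^sub>C m)^2" using assms[of l] by (simp add: power_mono)
    then show "0 \<le> Re (cinner (w - l *\<^sub>C m) (w - l *\<^sub>C m) - cinner w w)"
      by (simp add: cinner_self_Re)
  next
    fix l show "cinner (w - l *\<^sub>C m) (w - l *\<^sub>C m) - cinner w w = 0 - l * cinner w m - cnj l * cinner m w + cnj l * l * cinner m m"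
      by (simp add: cinner_expand_diff)
  next
    show "cinner m w = cnj (cinner w m)" by (rule cinner_commute)
  next
    show "0 \<le> Re (cinner m m)" unfolding cinner_self_Re by simp
  qed
  then show ?thesis by simp
qed

lemma proj_exists:
  fixes M :: "'a::chilbert set"
  assumes sub: "complex_subspace M" and cl: "closed M"
  shows "\<exists>p\<in>M. \<forall>m\<in>M. cinner (z - p) m = 0"
proof -
  define S where "S = (\<lambda>m. norm (z - m)) ` M"
  define d where "d = Inf S"
  have Sne: "S \<noteq> {}" using subspace_zero[OF sub] by (auto simp: S_def)
  have Sbdd: "bdd_below S" by (auto simp: S_def intro!: bdd_belowI[of _ 0])
  have d0: "0 \<le> d" unfolding d_def using Sne by (auto intro!: cInf_greatest simp: S_def)
  have dle: "d \<le> norm (z - m)" if "m \<in> M" for m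
    unfolding d_def using that Sbdd by (auto intro!: cInf_lower simp: S_def)
  have ex: "\<exists>m\<in>M. (norm (z - m))^2 < d^2 + 1 / real (Suc n)" for n
  proof -
    have "d < sqrt (d^2 + 1 / real (Suc n))"
      by (intro real_less_rsqrt) simp
    then obtain s where "s \<in> S" "s < sqrt (d^2 + 1 / real (Suc n))"
      using cInf_lessD[OF Sne] unfolding d_def by blast
    then obtain m where m: "m \<in> M" "norm (z - m) < sqrt (d^2 + 1 / real (Suc n))"
      by (auto simp: S_def)
    then have "(norm (z - m))^2 < (sqrt (d^2 + 1 / real (Suc n)))^2"
      by (intro power_strict_mono) auto
    then have "(norm (z - m))^2 < d^2 + 1 / real (Suc n)"
      by (simp add: add_nonneg_nonneg)
    then show ?thesis using m by blast
  qed
  have "\<forall>n. \<exists>m. m \<in> M \<and> (norm (z - m))^2 < d^2 + 1 / real (Suc n)" using ex by blast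
  from choice[OF this] obtain f where f0: "\<forall>n. f n \<in> M \<and> (norm (z - f n))^2 < d^2 + 1 / real (Suc n)"
    by blast
  then have f: "\<And>n. f n \<in> M" "\<And>n. (norm (z - f n))^2 < d^2 + 1 / real (Suc n)" by auto
  have cauchy_bound: "(norm (f n - f k))^2 \<le> 2 / real (Suc n) + 2 / real (Suc k)" for n k
  proof -
    have mid: "scaleR (1/2) (f n + f k) \<in> M"
      by (intro subspace_scaleR subspace_add sub f)
    have "d \<le> norm (z - scaleR (1/2) (f n + f k))" by (rule dle[OF mid])
    then have "d^2 \<le> (norm (z - scaleR (1/2) (f n + f k)))^2" using d0 by (simp add: power_mono)
    moreover have "(z - f n) + (z - f k) = scaleR 2 (z - scaleR (1/2) (f n + f k))"
      by (simp add: algebra_simps scaleR_2)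
    then have "(norm ((z - f n) + (z - f k)))^2 = 4 * (norm (z - scaleR (1/2) (f n + f k)))^2"
      by (simp add: power2_eq_square)
    moreover have "(norm ((z - f n) + (z - f k)))^2 + (norm ((z - f n) - (z - f k)))^2
        = 2*(norm (z - f n))^2 + 2*(norm (z - f k))^2" by (rule parallelogram)
    moreover have "(norm (f n - f k))^2 = (norm ((z - f n) - (z - f k)))^2"
      by (simp add: norm_minus_commute)
    ultimately show ?thesis using f(2)[of n] f(2)[of k] by linarith
  qed
  have "Cauchy f"
  proof (rule metric_CauchyI)
    fix e :: real assume e: "0 < e"
    obtain N :: nat where N: "4 / e^2 < real N" using reals_Archimedean2 by blast
    show "\<exists>N. \<forall>m\<ge>N. \<forall>n\<ge>N. dist (f m) (f n) < e"
    proof (intro exI allI impI)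
      fix m n assume mn: "N \<le> m" "N \<le> n"
      have "2 / real (Suc m) \<le> 2 / real (Suc N)" "2 / real (Suc n) \<le> 2 / real (Suc N)"
        using mn by (auto intro!: divide_left_mono)
      moreover have "4 / real (Suc N) < e^2"
      proof -
        have a: "4 < real N * e^2" using N e by (simp add: field_simps)
        have p: "0 < e^2" using e by simp
        have "4 < real N * e^2 + e^2" using a p by linarith
        then show ?thesis by (simp add: field_simps)
      qed
      ultimately have "(dist (f m) (f n))^2 < e^2"
        using cauchy_bound[of m n] by (simp add: dist_norm)
      then show "dist (f m) (f n) < e" using e by (simp add: power_less_imp_less_base)
    qed
  qed
  then have "convergent f" by (simp add: Cauchy_convergent_iff)
  then obtain p where p: "f \<longlonglongrightarrow> p" unfolding convergent_def by blast
  have pM: "p \<in> M" by (rule closed_sequentially[OF cl _ p]) (use f(1) in simp)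
  have lim1: "(\<lambda>n. (norm (z - f n))^2) \<longlonglongrightarrow> (norm (z - p))^2"
    by (rule tendsto_power[OF tendsto_norm[OF tendsto_diff[OF tendsto_const p]]])
  have lim2: "(\<lambda>n. d^2 + 1 / real (Suc n)) \<longlonglongrightarrow> d^2"
  proof -
    have "(\<lambda>n. d^2 + inverse (real (Suc n))) \<longlonglongrightarrow> d^2 + 0"
      by (rule tendsto_add[OF tendsto_const LIMSEQ_inverse_real_of_nat])
    then show ?thesis by (simp add: inverse_eq_divide)
  qed
  have "(norm (z - p))^2 \<le> d^2"
  proof (rule LIMSEQ_le[OF lim1 lim2])
    show "\<exists>N. \<forall>n\<ge>N. (norm (z - f n))^2 \<le> d^2 + 1 / real (Suc n)"
      using f(2) less_imp_le by blast
  qed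
  then have pd: "norm (z - p) \<le> d" using d0 by (rule power2_le_imp_le)
  have "cinner (z - p) m = 0" if mM: "m \<in> M" for m
  proof (rule orth_of_min)
    fix l
    have "p + l *\<^sub>C m \<in> M" by (intro subspace_add subspace_scaleC sub pM mM)
    then have "d \<le> norm (z - (p + l *\<^sub>C m))" by (rule dle)
    moreover have "z - (p + l *\<^sub>C m) = z - p - l *\<^sub>C m" by (simp add: algebra_simps)
    ultimately show "norm (z - p) \<le> norm (z - p - l *\<^sub>C m)" using pd by simp
  qed
  then show ?thesis using pM by blast
qed

lemma proj_unique:
  fixes M :: "'a::chilbert set"
  assumes sub: "complex_subspace M"
    and "p \<in> M" "\<forall>m\<in>M. cinner (z - p) m = 0"
    and "q \<in> M" "\<forall>m\<in>M. cinner (z - q) m = 0"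
  shows "p = q"
proof -
  have "q - p \<in> M" using assms subspace_diff by blast
  then have "cinner (z - p) (q - p) - cinner (z - q) (q - p) = 0" using assms by simp
  then have "cinner (q - p) (q - p) = 0" by (simp add: cinner_diff_left)
  then have "norm (q - p) = 0" by (simp add: cinner_self)
  then show ?thesis by simp
qed

lemma orth_proj_props:
  fixes M :: "('a::chilbert \<times> 'a) set"
  assumes sub: "complex_subspace M" and cl: "closed M"
  shows "orth_proj M z \<in> M" "\<And>m. m \<in> M \<Longrightarrow> cinner (z - orth_proj M z) m = 0"
proof -
  obtain p where p: "p \<in> M" "\<forall>m\<in>M. cinner (z - p) m = 0" using proj_exists[OF sub cl, of z] by blast
  have "\<exists>!p. p \<in> M \<and> (\<forall>m\<in>M. cinner (z - p) m = 0)"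
  proof (rule ex1I[of _ p])
    show "p \<in> M \<and> (\<forall>m\<in>M. cinner (z - p) m = 0)" using p by blast
    fix q assume "q \<in> M \<and> (\<forall>m\<in>M. cinner (z - q) m = 0)"
    then show "q = p" using proj_unique[OF sub, of q z p] p by blast
  qed
  then have "orth_proj M z \<in> M \<and> (\<forall>m\<in>M. cinner (z - orth_proj M z) m = 0)"
    unfolding orth_proj_alt by (rule theI')
  then show "orth_proj M z \<in> M" "\<And>m. m \<in> M \<Longrightarrow> cinner (z - orth_proj M z) m = 0" by auto
qed




lemma orth_proj_add:
  fixes N :: "('a::chilbert \<times> 'a) set"
  assumes sub: "complex_subspace N" and cl: "closed N"
  shows "orth_proj N (x + y) = orth_proj N x + orth_proj N y"
proof (rule proj_unique[OF sub])
  show "orth_proj N (x + y) \<in> N" by (rule orth_proj_props(1)[OF sub cl])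
  show "\<forall>m\<in>N. cinner (x + y - orth_proj N (x + y)) m = 0" using orth_proj_props(2)[OF sub cl] by blast
  show "orth_proj N x + orth_proj N y \<in> N"
    by (intro subspace_add[OF sub] orth_proj_props(1)[OF sub cl])
  show "\<forall>m\<in>N. cinner (x + y - (orth_proj N x + orth_proj N y)) m = 0"
  proof
    fix m assume m: "m \<in> N"
    have e: "x + y - (orth_proj N x + orth_proj N y) = (x - orth_proj N x) + (y - orth_proj N y)" by simp
    show "cinner (x + y - (orth_proj N x + orth_proj N y)) m = 0"
      unfolding e cinner_add_left
      using orth_proj_props(2)[OF sub cl m, of x] orth_proj_props(2)[OF sub cl m, of y]
      by simp
  qed
qed

lemma gap_bound:
  fixes M N :: "('a::chilbert \<times> 'a) set"
  assumes subM: "complex_subspace M" and clM: "closed M"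
    and subN: "complex_subspace N" and clN: "closed N"
    and s0: "0 \<le> s"
    and MN: "\<And>u. u \<in> M \<Longrightarrow> \<exists>p\<in>N. norm (u - p) \<le> s * norm u"
    and NM: "\<And>u. u \<in> N \<Longrightarrow> \<exists>p\<in>M. norm (u - p) \<le> s * norm u"
  shows "onorm (\<lambda>z. orth_proj M z - orth_proj N z) \<le> s"
proof (rule onorm_bound[OF s0])
  fix z
  define P where "P = orth_proj M"
  define Q where "Q = orth_proj N"
  define u where "u = P z"
  define w where "w = z - u"
  define a where "a = u - Q u"
  define b where "b = Q w"
  have uM: "u \<in> M" unfolding u_def P_def by (rule orth_proj_props(1)[OF subM clM])
  have wM: "\<And>m. m \<in> M \<Longrightarrow> cinner w m = 0"
    unfolding w_def u_def P_def by (rule orth_proj_props(2)[OF subM clM])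
  have QN: "\<And>x. Q x \<in> N" unfolding Q_def by (rule orth_proj_props(1)[OF subN clN])
  have QO: "\<And>x m. m \<in> N \<Longrightarrow> cinner (x - Q x) m = 0"
    unfolding Q_def by (rule orth_proj_props(2)[OF subN clN])
  have zuw: "z = u + w" unfolding w_def by simp
  have Qz: "Q z = Q u + Q w" unfolding zuw Q_def by (rule orth_proj_add[OF subN clN])
  have diff: "P z - Q z = a - b" unfolding a_def b_def Qz u_def by simp
  have bN: "b \<in> N" unfolding b_def by (rule QN)
  have ab: "cinner a b = 0" unfolding a_def by (rule QO[OF bN])
  have na: "norm a \<le> s * norm u"
  proof -
    obtain p where p: "p \<in> N" "norm (u - p) \<le> s * norm u" using MN[OF uM] by blast
    have "Q u - p \<in> N" by (intro subspace_diff[OF subN] QN p)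
    then have "cinner a (Q u - p) = 0" unfolding a_def by (rule QO)
    then have "(norm (a + (Q u - p)))^2 = (norm a)^2 + (norm (Q u - p))^2" by (rule pythagoras)
    moreover have "a + (Q u - p) = u - p" unfolding a_def by simp
    ultimately have "(norm a)^2 \<le> (norm (u - p))^2" by simp
    then have "norm a \<le> norm (u - p)" by (rule power2_le_imp_le) simp
    then show ?thesis using p(2) by linarith
  qed
  have nb: "norm b \<le> s * norm w"
  proof -
    obtain p where p: "p \<in> M" "norm (b - p) \<le> s * norm b" using NM[OF bN] by blast
    have "cinner (w - b) b = 0" unfolding b_def by (rule QO[OF QN])
    then have "cinner b (w - b) = 0" using cinner_commute[of b "w - b"] by simp
    then have bw: "cinner b w = cinner b b" by (simp add: cinner_diff_right)
    have "cinner p w = 0" using cinner_commute[of p w] wM[OF p(1)] by simp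
    then have "cinner b w = cinner (b - p) w" by (simp add: cinner_diff_left)
    then have "(norm b)^2 = Re (cinner (b - p) w)" using bw by (simp add: cinner_self_Re[symmetric])
    also have "\<dots> \<le> cmod (cinner (b - p) w)" by (rule complex_Re_le_cmod)
    also have "\<dots> \<le> norm (b - p) * norm w" by (rule cauchy_schwarz)
    also have "\<dots> \<le> s * norm b * norm w" using p(2) by (simp add: mult_right_mono)
    finally have h: "norm b * norm b \<le> (s * norm w) * norm b" by (simp add: power2_eq_square mult_ac)
    show ?thesis
    proof (cases "norm b = 0")
      case True then show ?thesis using s0 by simp
    next
      case False then have "norm b > 0" by simp
      then show ?thesis using h by (simp add: mult_le_cancel_right)
    qed
  qed
  have "cinner u w = 0" using cinner_commute[of u w] wM[OF uM] by simp
  then have nz: "(norm z)^2 = (norm u)^2 + (norm w)^2" unfolding zuw by (rule pythagoras)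
  have "(norm (P z - Q z))^2 = (norm a)^2 + (norm b)^2" unfolding diff by (rule pythagoras_diff[OF ab])
  also have "\<dots> \<le> (s * norm u)^2 + (s * norm w)^2"
    using na nb by (intro add_mono power_mono) auto
  also have "\<dots> = (s * norm z)^2" using nz by (simp add: power_mult_distrib algebra_simps)
  finally have "norm (P z - Q z) \<le> s * norm z" by (rule power2_le_imp_le) (use s0 in simp)
  then show "norm (orth_proj M z - orth_proj N z) \<le> s * norm z" unfolding P_def Q_def .
qed




lemma dense_unique:
  fixes D :: "'a::chilbert set"
  assumes dense: "closure D = UNIV" and h: "\<forall>x\<in>D. cinner x w1 = cinner x w2"
  shows "w1 = w2"
proof -
  define v where "v = w1 - w2"
  have hv: "\<forall>x\<in>D. cinner x v = 0" using h by (simp add: v_def cinner_diff_right)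
  have "(norm v)^2 \<le> e * norm v" if e: "e > 0" for e
  proof -
    have "v \<in> closure D" using dense by simp
    then obtain y where y: "y \<in> D" "dist y v < e" using e closure_approachable by blast
    have "cinner v v = cinner (v - y) v" using hv y(1) by (simp add: cinner_diff_left)
    then have "(norm v)^2 = Re (cinner (v - y) v)" by (simp add: cinner_self_Re[symmetric])
    also have "\<dots> \<le> cmod (cinner (v - y) v)" by (rule complex_Re_le_cmod)
    also have "\<dots> \<le> norm (v - y) * norm v" by (rule cauchy_schwarz)
    also have "\<dots> \<le> e * norm v" using y(2) by (intro mult_right_mono) (auto simp: dist_norm norm_minus_commute)
    finally show ?thesis .
  qed
  note b = this
  have "v = 0"
  proof (rule ccontr)
    assume "v \<noteq> 0"
    then have p: "norm v > 0" by simp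
    have "(norm v)^2 \<le> (norm v / 2) * norm v" using b[of "norm v / 2"] p by simp
    then have "norm v * norm v \<le> 0" by (simp add: power2_eq_square)
    then show False using mult_pos_pos[OF p p] by linarith
  qed
  then show ?thesis by (simp add: v_def)
qed

context
  fixes D :: "'a::chilbert set" and T :: "'a \<Rightarrow> 'a"
  assumes pco: "positive_closed_op D T"
begin

lemma sub: "complex_subspace D" using pco by (simp add: positive_closed_op_def densely_defined_def)
lemma dense: "closure D = UNIV" using pco by (simp add: positive_closed_op_def densely_defined_def)
lemma lin: "linear_on D T" using pco by (simp add: positive_closed_op_def densely_defined_def)
lemma gclosed: "closed (graph D T)" using pco by (simp add: positive_closed_op_def closed_op_def)
lemma adjdom: "adj_dom D T = D" using pco by (simp add: positive_closed_op_def self_adjoint_def)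
lemma adjval: "y \<in> D \<Longrightarrow> adjoint D T y = T y" using pco by (simp add: positive_closed_op_def self_adjoint_def)
lemma posIm: "x \<in> D \<Longrightarrow> Im (cinner (T x) x) = 0" using pco by (simp add: positive_closed_op_def)
lemma posRe: "x \<in> D \<Longrightarrow> 0 \<le> Re (cinner (T x) x)" using pco by (simp add: positive_closed_op_def)

lemma T_add: "x \<in> D \<Longrightarrow> y \<in> D \<Longrightarrow> T (x + y) = T x + T y" using lin by (simp add: linear_on_def)
lemma T_scaleC: "x \<in> D \<Longrightarrow> T (a *\<^sub>C x) = a *\<^sub>C T x" using lin by (simp add: linear_on_def)
lemma T_zero: "T 0 = 0"
  using T_scaleC[OF subspace_zero[OF sub], of 0] by simp
lemma T_diff: "x \<in> D \<Longrightarrow> y \<in> D \<Longrightarrow> T (x - y) = T x - T y"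
proof -
  assume x: "x \<in> D" and y: "y \<in> D"
  have e: "x - y = x + (-1) *\<^sub>C y" by (simp add: scaleC_minus1)
  have "(-1) *\<^sub>C y \<in> D" by (rule subspace_scaleC[OF sub y])
  then have "T (x - y) = T x + T ((-1) *\<^sub>C y)" unfolding e by (rule T_add[OF x])
  then show ?thesis using T_scaleC[OF y, of "-1"] by (simp add: scaleC_minus1)
qed

lemma adj_char:
  assumes "\<forall>x\<in>D. cinner (T x) y = cinner x z"
  shows "y \<in> D \<and> T y = z"
proof -
  have yD: "y \<in> D" using assms adjdom unfolding adj_dom_def by blast
  have "\<forall>x\<in>D. cinner (T x) y = cinner x (adjoint D T y)"
  proof -
    have ex: "\<exists>!z. \<forall>x\<in>D. cinner (T x) y = cinner x z"
    proof (rule ex1I[of _ z])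
      show "\<forall>x\<in>D. cinner (T x) y = cinner x z" by (rule assms)
      fix z' assume "\<forall>x\<in>D. cinner (T x) y = cinner x z'"
      then have "\<forall>x\<in>D. cinner x z' = cinner x z" using assms by simp
      then show "z' = z" by (rule dense_unique[OF dense])
    qed
    show ?thesis unfolding adjoint_def by (rule theI'[OF ex])
  qed
  then have "\<forall>x\<in>D. cinner x (adjoint D T y) = cinner x z" using assms by simp
  then have "adjoint D T y = z" by (rule dense_unique[OF dense])
  then show ?thesis using adjval[OF yD] yD by simp
qed

lemma symm: "x \<in> D \<Longrightarrow> y \<in> D \<Longrightarrow> cinner (T x) y = cinner x (T y)"
proof -
  assume x: "x \<in> D" and y: "y \<in> D"
  have "y \<in> adj_dom D T" using adjdom y by simp
  then obtain z where z: "\<forall>x\<in>D. cinner (T x) y = cinner x z" unfolding adj_dom_def by blast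
  then have "T y = z" using adj_char by blast
  then show ?thesis using z x by simp
qed

end




definition cval :: "'a::chilbert set \<Rightarrow> ('a \<Rightarrow> 'a) \<Rightarrow> real" where
  "cval D T = Inf {Re (cinner (T x) x) | x. x \<in> D \<and> norm x = 1}"

definition Aop :: "'a::chilbert set \<Rightarrow> ('a \<Rightarrow> 'a) \<Rightarrow> 'a \<Rightarrow> 'a" where
  "Aop D T x = T x - complex_of_real (cval D T) *\<^sub>C x"

lemma cinner_scaleR_both: "cinner (complex_of_real r *\<^sub>C x) (complex_of_real r *\<^sub>C (y::'a::chilbert))
   = complex_of_real (r^2) * cinner x y"
  by (simp add: cinner_scaleC_left cinner_scaleC_right power2_eq_square)

lemma unit_normalize:
  fixes y :: "'a::chilbert"
  assumes "y \<noteq> 0"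
  shows "norm (complex_of_real (1 / norm y) *\<^sub>C y) = 1"
proof -
  have "cmod (complex_of_real (1 / norm y)) = 1 / norm y" by (simp only: norm_of_real) simp
  then show ?thesis using assms by (simp only: norm_scaleC) simp
qed

context
  fixes D :: "'a::chilbert set" and T :: "'a \<Rightarrow> 'a"
  assumes pco: "positive_closed_op D T"
begin

lemmas Dsub = sub[OF pco] and Ddense = dense[OF pco] and Tlin_add = T_add[OF pco]
  and Tlin_scaleC = T_scaleC[OF pco] and Tlin_zero = T_zero[OF pco] and Tlin_diff = T_diff[OF pco]
  and Tadj_char = adj_char[OF pco] and Tsymm = symm[OF pco] and TposRe = posRe[OF pco]
  and TposIm = posIm[OF pco] and Tgclosed = gclosed[OF pco]

lemma unit_exists:
  assumes inf: "infinite_dimensional TYPE('a)"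
  shows "\<exists>x\<in>D. norm x = 1"
proof -
  obtain x :: 'a where "\<forall>c. x \<noteq> (\<Sum>v\<in>{}. c v *\<^sub>C v)"
    using inf unfolding infinite_dimensional_def by blast
  then have x0: "x \<noteq> 0" by simp
  have "\<exists>y\<in>D. y \<noteq> 0"
  proof (rule ccontr)
    assume "\<not> (\<exists>y\<in>D. y \<noteq> 0)"
    then have "D \<subseteq> {0}" by blast
    then have "closure D \<subseteq> {0}" using closure_mono[of D "{0}"] by simp
    moreover have "x \<in> closure D" using Ddense by simp
    ultimately show False using x0 by auto
  qed
  then obtain y where y: "y \<in> D" "y \<noteq> 0" by blast
  have "complex_of_real (1 / norm y) *\<^sub>C y \<in> D" by (rule subspace_scaleC[OF Dsub y(1)])
  then show ?thesis using unit_normalize[OF y(2)] by blast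
qed

lemma cval_props:
  assumes ne: "\<exists>x\<in>D. norm x = 1"
  shows "0 \<le> cval D T" "\<And>x. x \<in> D \<Longrightarrow> cval D T * (norm x)^2 \<le> Re (cinner (T x) x)"
    "\<And>x. x \<in> D \<Longrightarrow> norm x = 1 \<Longrightarrow> cval D T \<le> Re (cinner (T x) x)"
proof -
  define Q where "Q = {Re (cinner (T x) x) | x. x \<in> D \<and> norm x = 1}"
  have Qne: "Q \<noteq> {}" using ne by (auto simp: Q_def)
  have Qb: "bdd_below Q" by (auto simp: Q_def intro!: bdd_belowI[of _ 0] TposRe)
  show c0: "0 \<le> cval D T" unfolding cval_def Q_def[symmetric]
    using Qne by (rule cInf_greatest) (auto simp: Q_def intro: TposRe)
  show cl: "\<And>x. x \<in> D \<Longrightarrow> norm x = 1 \<Longrightarrow> cval D T \<le> Re (cinner (T x) x)"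
    unfolding cval_def Q_def[symmetric] using Qb by (auto intro!: cInf_lower simp: Q_def)
  fix x assume x: "x \<in> D"
  show "cval D T * (norm x)^2 \<le> Re (cinner (T x) x)"
  proof (cases "x = 0")
    case True then show ?thesis using Tlin_zero by simp
  next
    case False
    define r where "r = 1 / norm x"
    have uD: "complex_of_real r *\<^sub>C x \<in> D" by (rule subspace_scaleC[OF Dsub x])
    have un: "norm (complex_of_real r *\<^sub>C x) = 1" unfolding r_def by (rule unit_normalize[OF False])
    have "cinner (T (complex_of_real r *\<^sub>C x)) (complex_of_real r *\<^sub>C x) = complex_of_real (r^2) * cinner (T x) x"
      using Tlin_scaleC[OF x] cinner_scaleR_both by simp
    then have "cval D T \<le> r^2 * Re (cinner (T x) x)" using cl[OF uD un] by simp
    then have "cval D T \<le> Re (cinner (T x) x) / (norm x)^2" unfolding r_def by (simp add: power_divide)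
    then show ?thesis using False by (simp add: pos_le_divide_eq mult.commute)
  qed
qed

abbreviation "A \<equiv> Aop D T"
abbreviation "c \<equiv> cval D T"

lemma A_diff: "x \<in> D \<Longrightarrow> y \<in> D \<Longrightarrow> A (x - y) = A x - A y"
  unfolding Aop_def using Tlin_diff by (simp add: scaleC_diff_right algebra_simps)
lemma A_add: "x \<in> D \<Longrightarrow> y \<in> D \<Longrightarrow> A (x + y) = A x + A y"
  unfolding Aop_def using Tlin_add by (simp add: scaleC_add_right algebra_simps)
lemma A_scaleC: "x \<in> D \<Longrightarrow> A (a *\<^sub>C x) = a *\<^sub>C A x"
  unfolding Aop_def using Tlin_scaleC by (simp add: scaleC_diff_right scaleC_scaleC mult.commute)
lemma A_zero: "A 0 = 0" unfolding Aop_def using Tlin_zero by simp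

lemma A_symm: "x \<in> D \<Longrightarrow> y \<in> D \<Longrightarrow> cinner (A x) y = cinner x (A y)"
  unfolding Aop_def using Tsymm by (simp add: cinner_diff_left cinner_diff_right cinner_scaleC_left cinner_scaleC_right)

lemma A_form: "x \<in> D \<Longrightarrow> Re (cinner (A x) x) = Re (cinner (T x) x) - c * (norm x)^2"
  unfolding Aop_def by (simp add: cinner_diff_left cinner_scaleC_left cinner_self_Re)

lemma A_pos:
  assumes ne: "\<exists>x\<in>D. norm x = 1"
  shows "x \<in> D \<Longrightarrow> 0 \<le> Re (cinner (A x) x)"
  using A_form cval_props(2)[OF ne] by fastforce

end




context
  fixes D :: "'a::chilbert set" and T :: "'a \<Rightarrow> 'a"
  assumes pco: "positive_closed_op D T"
    and ne: "\<exists>x\<in>D. norm x = 1"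
begin

abbreviation "AA \<equiv> Aop D T"
abbreviation "cc \<equiv> cval D T"

lemmas Dsub' = sub[OF pco] and Ddense' = dense[OF pco]
  and Tadj_char' = adj_char[OF pco] and Tgclosed' = gclosed[OF pco]
  and Ad = A_diff[OF pco] and Aa = A_add[OF pco] and As = A_scaleC[OF pco] and Az = A_zero[OF pco]
  and Asy = A_symm[OF pco] and Ap = A_pos[OF pco ne] and Af = A_form[OF pco]
  and cprops = cval_props[OF pco ne]

lemma A_scale_bound:
  assumes eta: "\<eta> > 0" and h: "\<forall>x\<in>D. norm x = 1 \<longrightarrow> \<eta> < norm (AA x)"
  shows "x \<in> D \<Longrightarrow> \<eta> * norm x \<le> norm (AA x)"
proof -
  assume x: "x \<in> D"
  show ?thesis
  proof (cases "x = 0")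
    case True then show ?thesis by simp
  next
    case False
    define r where "r = 1 / norm x"
    have uD: "complex_of_real r *\<^sub>C x \<in> D" by (rule subspace_scaleC[OF Dsub' x])
    have un: "norm (complex_of_real r *\<^sub>C x) = 1" unfolding r_def by (rule unit_normalize[OF False])
    have "\<eta> < norm (AA (complex_of_real r *\<^sub>C x))" using h uD un by blast
    also have "\<dots> = r * norm (AA x)" using As[OF x] by (simp only: norm_scaleC norm_of_real) (simp add: r_def)
    finally have "\<eta> < norm (AA x) / norm x" by (simp add: r_def)
    then show ?thesis using False by (simp add: pos_less_divide_eq mult.commute less_imp_le)
  qed
qed

lemma range_closed:
  assumes eta: "\<eta> > 0" and bb: "\<And>x. x \<in> D \<Longrightarrow> \<eta> * norm x \<le> norm (AA x)"
  shows "closed (AA ` D)"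
  unfolding closed_sequential_limits
proof (intro allI impI, elim conjE)
  fix f l assume fR: "\<forall>n. f n \<in> AA ` D" and fl: "f \<longlonglongrightarrow> l"
  have "\<forall>n. \<exists>x. x \<in> D \<and> AA x = f n"
  proof
    fix n
    have "f n \<in> AA ` D" using fR by simp
    then obtain x where "f n = AA x" "x \<in> D" by (rule imageE)
    then show "\<exists>x. x \<in> D \<and> AA x = f n" by auto
  qed
  from choice[OF this] obtain g where g: "\<forall>n. g n \<in> D \<and> AA (g n) = f n" by blast
  have "Cauchy f" using fl by (rule LIMSEQ_imp_Cauchy)
  have "Cauchy g"
  proof (rule metric_CauchyI)
    fix e :: real assume e: "e > 0"
    then have "e * \<eta> > 0" using eta by simp
    then obtain N where N: "\<forall>m\<ge>N. \<forall>n\<ge>N. dist (f m) (f n) < e * \<eta>"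
      using metric_CauchyD[OF \<open>Cauchy f\<close>] by presburger
    show "\<exists>N. \<forall>m\<ge>N. \<forall>n\<ge>N. dist (g m) (g n) < e"
    proof (intro exI allI impI)
      fix m n assume mn: "N \<le> m" "N \<le> n"
      have "\<eta> * norm (g m - g n) \<le> norm (AA (g m - g n))" using g by (intro bb subspace_diff[OF Dsub']) auto
      also have "\<dots> = dist (f m) (f n)" using g Ad by (simp add: dist_norm)
      also have "\<dots> < e * \<eta>" using N mn by simp
      finally show "dist (g m) (g n) < e" using eta by (simp add: dist_norm mult.commute)
    qed
  qed
  then have "convergent g" by (simp add: Cauchy_convergent_iff)
  then obtain x where gx: "g \<longlonglongrightarrow> x" unfolding convergent_def by blast
  have Tg: "T (g n) = f n + complex_of_real cc *\<^sub>C g n" for n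
    using g unfolding Aop_def by (simp add: diff_eq_eq)
  have "(\<lambda>n. f n + scaleR cc (g n)) \<longlonglongrightarrow> l + scaleR cc x"
    by (rule tendsto_add[OF fl tendsto_scaleR[OF tendsto_const gx]])
  then have "(\<lambda>n. T (g n)) \<longlonglongrightarrow> l + complex_of_real cc *\<^sub>C x"
    unfolding Tg by (simp add: scaleC_of_real)
  then have lim: "(\<lambda>n. (T (g n), g n)) \<longlonglongrightarrow> (l + complex_of_real cc *\<^sub>C x, x)"
    using gx by (rule tendsto_Pair)
  have gn: "\<And>n. (T (g n), g n) \<in> graph D T" using g unfolding graph_def by auto
  have "(l + complex_of_real cc *\<^sub>C x, x) \<in> graph D T"
    by (rule closed_sequentially[OF Tgclosed' gn lim])
  then have xD: "x \<in> D" and Tx: "T x = l + complex_of_real cc *\<^sub>C x" by (auto simp: graph_def)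
  have e: "AA x = l" unfolding Aop_def Tx by simp
  have "AA x \<in> AA ` D" using xD by (rule imageI)
  then show "l \<in> AA ` D" unfolding e .
qed

lemma range_sub: "complex_subspace (AA ` D)"
  unfolding complex_subspace_def
proof (intro conjI ballI allI)
  show "0 \<in> AA ` D" using Az subspace_zero[OF Dsub'] by force
next
  fix x y assume "x \<in> AA ` D" "y \<in> AA ` D"
  then obtain a b where "a \<in> D" "b \<in> D" "x = AA a" "y = AA b" by blast
  then show "x + y \<in> AA ` D" using Aa subspace_add[OF Dsub'] by (metis image_eqI)
next
  fix k x assume "x \<in> AA ` D"
  then obtain a where "a \<in> D" "x = AA a" by blast
  then show "k *\<^sub>C x \<in> AA ` D" using As subspace_scaleC[OF Dsub'] by (metis image_eqI)
qed

lemma A_surj: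
  assumes eta: "\<eta> > 0" and bb: "\<And>x. x \<in> D \<Longrightarrow> \<eta> * norm x \<le> norm (AA x)"
  shows "\<exists>x\<in>D. AA x = y"
proof -
  obtain p where pR: "p \<in> AA ` D" and po: "\<forall>r\<in>AA ` D. cinner (y - p) r = 0"
    using proj_exists[OF range_sub range_closed[OF eta bb]] by blast
  define z where "z = y - p"
  have "\<forall>x\<in>D. cinner (T x) z = cinner x (complex_of_real cc *\<^sub>C z)"
  proof
    fix x assume x: "x \<in> D"
    have "cinner z (AA x) = 0" using po x unfolding z_def by blast
    then have "cinner (AA x) z = 0" using cinner_commute[of "AA x" z] by simp
    then show "cinner (T x) z = cinner x (complex_of_real cc *\<^sub>C z)"
      unfolding Aop_def by (simp add: cinner_diff_left cinner_scaleC_left cinner_scaleC_right)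
  qed
  then have "z \<in> D \<and> T z = complex_of_real cc *\<^sub>C z" by (rule Tadj_char')
  then have "z \<in> D" "AA z = 0" unfolding Aop_def by auto
  then have "\<eta> * norm z \<le> 0" using bb by fastforce
  then have "z = 0" using eta by (simp add: mult_le_0_iff)
  then show ?thesis using pR unfolding z_def by auto
qed

lemma A_coercive:
  assumes eta: "\<eta> > 0" and bb: "\<And>x. x \<in> D \<Longrightarrow> \<eta> * norm x \<le> norm (AA x)"
    and x: "x \<in> D"
  shows "\<eta> * (norm x)^2 \<le> Re (cinner (AA x) x)"
proof (cases "x = 0")
  case True then show ?thesis by simp
next
  case False
  obtain w where w: "w \<in> D" "AA w = x" using A_surj[OF eta bb] by blast
  have wb: "\<eta> * norm w \<le> norm x" using bb[OF w(1)] w(2) by simp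
  have "(cmod (cinner (AA w) x))^2 \<le> Re (cinner (AA w) w) * Re (cinner (AA x) x)"
  proof (rule abstract_CS[where g="\<lambda>l. cinner (AA (w - l *\<^sub>C x)) (w - l *\<^sub>C x)"])
    fix l
    have "w - l *\<^sub>C x \<in> D" by (intro subspace_diff[OF Dsub'] subspace_scaleC[OF Dsub'] w x)
    then show "0 \<le> Re (cinner (AA (w - l *\<^sub>C x)) (w - l *\<^sub>C x))" by (rule Ap)
  next
    fix l
    have lx: "l *\<^sub>C x \<in> D" by (rule subspace_scaleC[OF Dsub' x])
    have e: "AA (w - l *\<^sub>C x) = AA w - l *\<^sub>C AA x" using Ad[OF w(1) lx] As[OF x] by simp
    show "cinner (AA (w - l *\<^sub>C x)) (w - l *\<^sub>C x) = cinner (AA w) w - l * cinner (AA w) x - cnj l * cinner (AA x) w + cnj l * l * cinner (AA x) x"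
      unfolding e by (simp add: cinner_diff_left cinner_diff_right cinner_scaleC_left cinner_scaleC_right algebra_simps)
  next
    show "cinner (AA x) w = cnj (cinner (AA w) x)"
      using Asy[OF x w(1)] cinner_commute[of x "AA w"] by simp
  next
    show "0 \<le> Re (cinner (AA x) x)" by (rule Ap[OF x])
  qed
  moreover have "cinner (AA w) x = complex_of_real ((norm x)^2)" using w(2) by (simp add: cinner_self)
  moreover have "Re (cinner (AA w) w) \<le> norm x * norm w"
    using w(2) complex_Re_le_cmod[of "cinner x w"] cauchy_schwarz[of x w] by simp
  ultimately have h: "(norm x)^2 * (norm x)^2 \<le> (norm x * norm w) * Re (cinner (AA x) x)"
    using Ap[OF x] by (smt (verit, best) mult_right_mono norm_of_real power2_eq_square abs_of_nonneg zero_le_power2)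
  have "(norm x * norm w) * Re (cinner (AA x) x) \<le> (norm x * (norm x / \<eta>)) * Re (cinner (AA x) x)"
    using wb eta Ap[OF x] by (intro mult_right_mono mult_left_mono) (auto simp: field_simps)
  with h have "(norm x)^2 * (norm x)^2 \<le> ((norm x)^2 / \<eta>) * Re (cinner (AA x) x)"
    by (simp add: power2_eq_square)
  then have "(norm x)^2 * (norm x)^2 \<le> (norm x)^2 * (Re (cinner (AA x) x) / \<eta>)" by simp
  then have "(norm x)^2 \<le> Re (cinner (AA x) x) / \<eta>"
    by (rule mult_left_le_imp_le) (use False in simp)
  then show ?thesis using eta by (simp add: pos_le_divide_eq mult.commute)
qed

lemma approx_eig:
  assumes eta: "\<eta> > 0"
  shows "\<exists>x0\<in>D. norm x0 = 1 \<and> norm (AA x0) \<le> \<eta>"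
proof (rule ccontr)
  assume "\<not> ?thesis"
  then have h: "\<forall>x\<in>D. norm x = 1 \<longrightarrow> \<eta> < norm (AA x)" by force
  note bb = A_scale_bound[OF eta h]
  define Q where "Q = {Re (cinner (T x) x) | x. x \<in> D \<and> norm x = 1}"
  have Qne: "Q \<noteq> {}" using ne by (auto simp: Q_def)
  have "cc + \<eta> \<le> Inf Q"
  proof (rule cInf_greatest[OF Qne])
    fix q assume "q \<in> Q"
    then obtain x where x: "x \<in> D" "norm x = 1" "q = Re (cinner (T x) x)" by (auto simp: Q_def)
    have "\<eta> * (norm x)^2 \<le> Re (cinner (AA x) x)" by (rule A_coercive[OF eta bb x(1)])
    then show "cc + \<eta> \<le> q" using Af[OF x(1)] x by simp
  qed
  then show False using eta unfolding cval_def Q_def by simp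
qed

end




lemma graph_sub:
  fixes F :: "'a::chilbert \<Rightarrow> 'a"
  assumes sub: "complex_subspace D" and lin: "linear_on D F"
  shows "complex_subspace (graph D F)"
proof -
  have "F (0 *\<^sub>C 0) = 0 *\<^sub>C F 0" using lin subspace_zero[OF sub] unfolding linear_on_def by blast
  then have F0: "F 0 = 0" by simp
  show ?thesis unfolding complex_subspace_def
  proof (intro conjI ballI allI)
    show "0 \<in> graph D F" unfolding graph_def using F0 subspace_zero[OF sub]
      by (auto simp: zero_prod_def)
  next
    fix p q assume "p \<in> graph D F" "q \<in> graph D F"
    then obtain x y where xy: "x \<in> D" "y \<in> D" "p = (F x, x)" "q = (F y, y)" unfolding graph_def by blast
    have "x + y \<in> D" by (rule subspace_add[OF sub xy(1,2)])
    moreover have "F (x + y) = F x + F y" using lin xy unfolding linear_on_def by blast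
    ultimately show "p + q \<in> graph D F" unfolding graph_def using xy by auto
  next
    fix k p assume "p \<in> graph D F"
    then obtain x where x: "x \<in> D" "p = (F x, x)" unfolding graph_def by blast
    have "k *\<^sub>C x \<in> D" by (rule subspace_scaleC[OF sub x(1)])
    moreover have "F (k *\<^sub>C x) = k *\<^sub>C F x" using lin x unfolding linear_on_def by blast
    ultimately show "k *\<^sub>C p \<in> graph D F" unfolding graph_def using x by (auto simp: scaleC_prod_def)
  qed
qed

lemma norm_Pair_zero2: "norm (a, 0::'a::chilbert) = norm (a::'a)"
  by (simp add: norm_Pair)

theorem theorem3p4:
  fixes T :: "'a::chilbert \<Rightarrow> 'a" and D :: "'a set" and \<epsilon> :: real
  assumes "infinite_dimensional TYPE('a)"
    and "positive_closed_op D T"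
    and "\<epsilon> > 0"
  shows "\<exists>S. bounded_clinear S \<and> onorm S \<le> \<epsilon>
           \<and> minimum_attaining D (\<lambda>x. T x + S x)
           \<and> gap D (\<lambda>x. S x + T x) D T \<le> \<epsilon>"
proof -
  note pco = assms(2) and ep = assms(3)
  have ne: "\<exists>x\<in>D. norm x = 1" by (rule unit_exists[OF pco assms(1)])
  define \<eta> where "\<eta> = \<epsilon> / 3"
  have eta: "\<eta> > 0" using ep by (simp add: \<eta>_def)
  obtain x0 where x0: "x0 \<in> D" "norm x0 = 1" "norm (Aop D T x0) \<le> \<eta>"
    using approx_eig[OF pco ne eta] by blast
  define v where "v = Aop D T x0"
  define c where "c = cval D T"
  define S where "S = (\<lambda>x. (cinner v x0 * cinner x0 x) *\<^sub>C x0 - cinner x0 x *\<^sub>C v - cinner v x *\<^sub>C x0)"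
  have Dsub: "complex_subspace D" by (rule sub[OF pco])
  have c0: "0 \<le> c" unfolding c_def by (rule cval_props(1)[OF pco ne])
  have x0x0: "cinner x0 x0 = 1" using x0(2) by (simp add: cinner_self)
  have Sbound: "norm (S x) \<le> \<epsilon> * norm x" for x
  proof -
    have "norm (S x) \<le> norm ((cinner v x0 * cinner x0 x) *\<^sub>C x0) + norm (cinner x0 x *\<^sub>C v) + norm (cinner v x *\<^sub>C x0)"
      unfolding S_def
      using norm_triangle_ineq4[of "(cinner v x0 * cinner x0 x) *\<^sub>C x0 - cinner x0 x *\<^sub>C v" "cinner v x *\<^sub>C x0"]
        norm_triangle_ineq4[of "(cinner v x0 * cinner x0 x) *\<^sub>C x0" "cinner x0 x *\<^sub>C v"] by linarith
    also have "\<dots> = cmod (cinner v x0) * cmod (cinner x0 x) + cmod (cinner x0 x) * norm v + cmod (cinner v x)"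
      using x0(2) by (simp add: norm_scaleC norm_mult)
    also have "\<dots> \<le> (norm v * 1) * (1 * norm x) + (1 * norm x) * norm v + norm v * norm x"
      using cauchy_schwarz[of v x0] cauchy_schwarz[of x0 x] cauchy_schwarz[of v x] x0(2)
      by (intro add_mono mult_mono) auto
    also have "\<dots> = 3 * norm v * norm x" by simp
    also have "\<dots> \<le> 3 * \<eta> * norm x" using x0(3) by (simp add: v_def mult_right_mono)
    finally show ?thesis by (simp add: \<eta>_def)
  qed
  have Sadd: "S (x + y) = S x + S y" for x y
    unfolding S_def by (simp add: cinner_add_right scaleC_add_left distrib_left algebra_simps)
  have Sscale: "S (a *\<^sub>C x) = a *\<^sub>C S x" for a x
    unfolding S_def by (simp add: cinner_scaleC_right scaleC_diff_right scaleC_add_right scaleC_scaleC algebra_simps)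
  have Slin: "linear_on UNIV S" unfolding linear_on_def using Sadd Sscale by blast
  have bcl: "bounded_clinear S" unfolding bounded_clinear_def
  proof (intro conjI exI[of _ \<epsilon>] allI)
    show "linear_on UNIV S" by (rule Slin)
    fix x show "norm (S x) \<le> norm x * \<epsilon>" using Sbound[of x] by (simp add: mult.commute)
  qed
  have onS: "onorm S \<le> \<epsilon>" by (rule onorm_bound) (use ep Sbound in auto)
  have blS: "bounded_linear S"
  proof (rule bounded_linear_intro[where K=\<epsilon>])
    show "S (x + y) = S x + S y" for x y by (rule Sadd)
    show "S (scaleR r x) = scaleR r (S x)" for r x by (simp add: scaleR_scaleC Sscale)
    show "norm (S x) \<le> norm x * \<epsilon>" for x using Sbound[of x] by (simp add: mult.commute)
  qed
  have lower: "c * norm x \<le> norm (T x + S x)" if x: "x \<in> D" for x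
  proof -
    define A where "A = Aop D T"
    define \<alpha> where "\<alpha> = cinner x0 x"
    define y where "y = x - \<alpha> *\<^sub>C x0"
    define W where "W = A x + S x"
    have yD: "y \<in> D" unfolding y_def by (intro subspace_diff[OF Dsub] subspace_scaleC[OF Dsub] x x0(1))
    have ax0: "\<alpha> *\<^sub>C x0 \<in> D" by (rule subspace_scaleC[OF Dsub x0(1)])
    have Ay: "A y = A x - \<alpha> *\<^sub>C v"
      unfolding y_def A_def v_def using A_diff[OF pco x ax0] A_scaleC[OF pco x0(1)] by simp
    have Ax0: "cinner (A x) x0 = cinner x v" unfolding A_def v_def by (rule A_symm[OF pco x x0(1)])
    have xAx: "cinner x (A x) = cinner (A x) x" unfolding A_def by (rule A_symm[OF pco x x, symmetric])
    have ca: "cnj \<alpha> = cinner x x0" unfolding \<alpha>_def by (simp add: cinner_commute[of x x0])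
    have "cinner (A y) y = cinner (A x - \<alpha> *\<^sub>C v) (x - \<alpha> *\<^sub>C x0)"
      by (simp only: Ay) (simp only: y_def)
    also have "\<dots> = cinner (A x) x - \<alpha> * cinner (A x) x0 - cnj \<alpha> * cinner v x + cnj \<alpha> * \<alpha> * cinner v x0"
      by (simp add: cinner_diff_left cinner_diff_right cinner_scaleC_left cinner_scaleC_right algebra_simps)
    also have "\<dots> = cinner x W"
      unfolding W_def S_def Ax0 ca
      by (simp add: cinner_add_right cinner_diff_right cinner_scaleC_right xAx \<alpha>_def algebra_simps)
    finally have yW: "cinner (A y) y = cinner x W" .
    have W0: "0 \<le> Re (cinner x W)" using A_pos[OF pco ne yD] yW unfolding A_def by simp
    have TS: "T x + S x = complex_of_real c *\<^sub>C x + W" unfolding W_def A_def Aop_def c_def by simp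
    have "(norm (T x + S x))^2 = (norm (complex_of_real c *\<^sub>C x))^2 + (norm W)^2 + 2 * Re (cinner (complex_of_real c *\<^sub>C x) W)"
      unfolding TS by (rule norm_add_sq)
    also have "Re (cinner (complex_of_real c *\<^sub>C x) W) = c * Re (cinner x W)" by (simp add: cinner_scaleC_left)
    also have "norm (complex_of_real c *\<^sub>C x) = c * norm x" using c0 by (simp add: norm_scaleC)
    finally have "(norm (T x + S x))^2 \<ge> (c * norm x)^2" using W0 c0 by (simp add: power2_eq_square)
    then show ?thesis by (rule power2_le_imp_le) simp
  qed
  have Tx0: "T x0 + S x0 = complex_of_real c *\<^sub>C x0"
  proof -
    have "S x0 = - v" unfolding S_def x0x0 by (simp add: scaleC_one)
    then show ?thesis unfolding v_def Aop_def c_def by simp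
  qed
  have nTx0: "norm (T x0 + S x0) = c" unfolding Tx0 using x0(2) c0 by (simp add: norm_scaleC)
  have mm: "min_modulus D (\<lambda>x. T x + S x) = c"
    unfolding min_modulus_def
  proof (rule cInf_eq_minimum)
    show "c \<in> {norm (T x + S x) |x. x \<in> D \<and> norm x = 1}" using x0 nTx0 by force
    fix r assume "r \<in> {norm (T x + S x) |x. x \<in> D \<and> norm x = 1}"
    then obtain x where "x \<in> D" "norm x = 1" "r = norm (T x + S x)" by blast
    then show "c \<le> r" using lower[of x] by simp
  qed
  have minatt: "minimum_attaining D (\<lambda>x. T x + S x)"
    unfolding minimum_attaining_def mm using x0 nTx0 by blast
  have linT: "linear_on D T" by (rule lin[OF pco])
  have linST: "linear_on D (\<lambda>x. S x + T x)"
    using linT Sadd Sscale unfolding linear_on_def by (simp add: scaleC_add_right algebra_simps)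
  have clT: "closed (graph D T)" by (rule gclosed[OF pco])
  have clST: "closed (graph D (\<lambda>x. S x + T x))"
    unfolding closed_sequential_limits
  proof (intro allI impI, elim conjE)
    fix u l assume uG: "\<forall>n. u n \<in> graph D (\<lambda>x. S x + T x)" and ul: "u \<longlonglongrightarrow> l"
    have u: "snd (u n) \<in> D" "fst (u n) = S (snd (u n)) + T (snd (u n))" for n
    proof -
      have "u n \<in> graph D (\<lambda>x. S x + T x)" using uG by blast
      then obtain x where "u n = (S x + T x, x)" "x \<in> D" unfolding graph_def by blast
      then show "snd (u n) \<in> D" "fst (u n) = S (snd (u n)) + T (snd (u n))" by auto
    qed
    have sl: "(\<lambda>n. snd (u n)) \<longlonglongrightarrow> snd l" by (rule tendsto_snd[OF ul])
    have "(\<lambda>n. fst (u n) - S (snd (u n))) \<longlonglongrightarrow> fst l - S (snd l)"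
      by (rule tendsto_diff[OF tendsto_fst[OF ul] bounded_linear.tendsto[OF blS sl]])
    then have "(\<lambda>n. T (snd (u n))) \<longlonglongrightarrow> fst l - S (snd l)" using u(2) by simp
    then have lim: "(\<lambda>n. (T (snd (u n)), snd (u n))) \<longlonglongrightarrow> (fst l - S (snd l), snd l)"
      using sl by (rule tendsto_Pair)
    have gn: "\<And>n. (T (snd (u n)), snd (u n)) \<in> graph D T" using u(1) unfolding graph_def by auto
    have "(fst l - S (snd l), snd l) \<in> graph D T" by (rule closed_sequentially[OF clT gn lim])
    then have "snd l \<in> D" "T (snd l) = fst l - S (snd l)" unfolding graph_def by auto
    then show "l \<in> graph D (\<lambda>x. S x + T x)" unfolding graph_def
      by (auto intro!: exI[of _ "snd l"] simp: prod_eq_iff)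
  qed
  have gapb: "gap D (\<lambda>x. S x + T x) D T \<le> \<epsilon>"
    unfolding gap_def
  proof (rule gap_bound[OF graph_sub[OF Dsub linST] clST graph_sub[OF Dsub linT] clT])
    show "0 \<le> \<epsilon>" using ep by simp
  next
    fix u assume "u \<in> graph D (\<lambda>x. S x + T x)"
    then obtain x where x: "x \<in> D" "u = (S x + T x, x)" unfolding graph_def by blast
    have "(T x, x) \<in> graph D T" using x(1) unfolding graph_def by auto
    moreover have "norm (u - (T x, x)) \<le> \<epsilon> * norm u"
    proof -
      have "norm (u - (T x, x)) = norm (S x)" using x(2) by (simp add: norm_Pair)
      also have "\<dots> \<le> \<epsilon> * norm x" by (rule Sbound)
      also have "\<dots> \<le> \<epsilon> * norm u" using x(2) ep norm_snd_le[where x="S x + T x" and y=x] by (simp add: mult_left_mono)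
      finally show ?thesis .
    qed
    ultimately show "\<exists>p\<in>graph D T. norm (u - p) \<le> \<epsilon> * norm u" by blast
  next
    fix u assume "u \<in> graph D T"
    then obtain x where x: "x \<in> D" "u = (T x, x)" unfolding graph_def by blast
    have "(S x + T x, x) \<in> graph D (\<lambda>x. S x + T x)" using x(1) unfolding graph_def by auto
    moreover have "norm (u - (S x + T x, x)) \<le> \<epsilon> * norm u"
    proof -
      have "norm (u - (S x + T x, x)) = norm (S x)" using x(2) by (simp add: norm_Pair)
      also have "\<dots> \<le> \<epsilon> * norm x" by (rule Sbound)
      also have "\<dots> \<le> \<epsilon> * norm u" using x(2) ep norm_snd_le[where x="T x" and y=x] by (simp add: mult_left_mono)
      finally show ?thesis .
    qed
    ultimately show "\<exists>p\<in>graph D (\<lambda>x. S x + T x). norm (u - p) \<le> \<epsilon> * norm u" by blast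
  qed
  show ?thesis using bcl onS minatt gapb by blast
qed



end
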